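(* Let $N\ge 2$, $n\ge1$. For $i=1,\dots,N$ let $f_i:\mathbb{R}^n\to\mathbb{R}$ be twice continuously differentiable with $\mu I_n\preceq\nabla^2 f_i(x)\preceq L I_n$ for all $x$ ($0<\mu\le L$), and with Lipschitz Hessians: $\|\nabla^2 f_i(x)-\nabla^2 f_i(y)\|\le \bar L\|x-y\|$ for all $x,y$ and all $i$. Let $f=\frac1N\sum_i f_i$ with unique minimizer $x^\star$. For $\mathbf{x}\in\mathbb{R}^{N\times n}$ with rows $x_1,\dots,x_N$ define $H_{tr}(\mathbf{x})=\frac1N\sum_{i=1}^N\nabla^2 f_i(x_i)$ and $H_{app}(\mathbf{x})=\big(\frac1N\sum_{i=1}^N(\nabla^2 f_i(x_i))^{-1}\big)^{-1}$, and assume there is $\gamma$ with $\|H_{tr}(\mathbf{x})-H_{app}(\mathbf{x})\|\le\gamma$ for all $\mathbf{x}\in\mathbb{R}^{N\times n}$. Let $W\in\mathbb{R}^{N\times N}$ be a symmetric doubly stochastic consensus matrix of a connected undirected graph with $\sigma=\|W-\frac1N\mathbf{1}\mathbf{1}^T\|_2<1$. Consider the Network-GIANT iteration $$\mathbf{x}_{k+1}=W\mathbf{x}_k-\eta\,\mathbf{y}_k,\qquad \mathbf{s}_{k+1}=W\mathbf{s}_k+\nabla_{k+1}-\nabla_k,\qquad \mathbf{s}_0=\nabla_0,$$ where $\nabla_k\in\mathbb{R}^{N\times n}$ has $i$-th row $\nabla f_i(x_i^k)$ ($x_i^k$ the $i$-th row of $\mathbf{x}_k$, gradients as row vectors) and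 $\mathbf{y}_k$ has $i$-th row $s_i^k(\nabla^2 f_i(x_i^k))^{-1}$ ($s_i^k$ the $i$-th row of $\mathbf{s}_k$). Let $\bar x_k=\frac1N\mathbf{1}^T\mathbf{x}_k$ and $g_k=\frac1N\mathbf{1}^T\nabla_k$. If $\gamma<\mu$ and $0<\eta<1$, then for every $k\ge0$, $$\|\bar x_{k+1}-x^\star\|\le\Big(1-\eta\big(1-\tfrac{\gamma}{\mu}\big)\Big)\|\bar x_k-x^\star\|+\frac{\eta\bar L}{\mu\sqrt N}\|\mathbf{x}_k-\mathbf{1}\bar x_k\|\,\|\bar x_k-x^\star\|+\frac{\eta\bar L}{2\mu}\|\bar x_k-x^\star\|^2+\frac{\eta}{\mu\sqrt N}\|\mathbf{s}_k-\mathbf{1}g_k\|+\frac{\eta L}{\mu\sqrt N}\|\mathbf{x}_k-\mathbf{1}\bar x_k\|.$$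
   Context: Vector norms $\|\cdot\|$ are Euclidean 2-norms; for matrices $\|\cdot\|$ denotes the Frobenius norm and $\|\cdot\|_2$ the spectral norm. $\mathbf{1}\in\mathbb{R}^N$ is the all-ones column vector. Points of $\mathbb{R}^n$ are treated as row vectors where convenient. *)

theory Defs
  imports "HOL-Analysis.Analysis"
begin

definition loewner_le :: "real^'n^'n \<Rightarrow> real^'n^'n \<Rightarrow> bool" where
  "loewner_le A B \<longleftrightarrow> (\<forall>v. v \<bullet> ((B - A) *v v) \<ge> 0)"

definition spec_norm :: "real^'m^'m \<Rightarrow> real" where
  "spec_norm A = onorm (\<lambda>v. A *v v)"

definition avg_mat :: "real^'m^'m" where
  "avg_mat = (\<chi> i j. 1 / real CARD('m))"

definition row_avg :: "real^'n^'m \<Rightarrow> real^'n" where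
  "row_avg X = (1 / real CARD('m)) *\<^sub>R (\<Sum>i\<in>UNIV. X $ i)"

definition ones_row :: "real^'n \<Rightarrow> real^'n^'m" where
  "ones_row v = (\<chi> i. v)"

definition doubly_stochastic :: "real^'m^'m \<Rightarrow> bool" where
  "doubly_stochastic W \<longleftrightarrow> (\<forall>i j. W $ i $ j \<ge> 0) \<and>
     (\<forall>i. (\<Sum>j\<in>UNIV. W $ i $ j) = 1) \<and> (\<forall>j. (\<Sum>i\<in>UNIV. W $ i $ j) = 1)"

definition consensus_matrix_of :: "('m \<Rightarrow> 'm \<Rightarrow> bool) \<Rightarrow> real^'m^'m \<Rightarrow> bool" where
  "consensus_matrix_of E W \<longleftrightarrow> (\<forall>i j. E i j \<longleftrightarrow> E j i) \<and> (\<forall>i. \<not> E i i) \<and>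
     (\<forall>i j. E\<^sup>*\<^sup>* i j) \<and> (\<forall>i j. i \<noteq> j \<longrightarrow> W $ i $ j \<noteq> 0 \<longrightarrow> E i j)"

end

theory Submission
  imports Defs
begin

lemma mv_norm_le:
  fixes A :: "real^'n^'m"
  shows "norm (A *v x) \<le> norm A * norm x"
proof -
  have "norm (A *v x) = L2_set (\<lambda>i. \<bar>A $ i \<bullet> x\<bar>) UNIV"
    by (simp add: norm_vec_def matrix_mult_dot)
  also have "\<dots> \<le> L2_set (\<lambda>i. norm (A $ i) * norm x) UNIV"
    by (rule L2_set_mono) (auto simp: Cauchy_Schwarz_ineq2)
  also have "\<dots> = norm A * norm x"
    by (simp add: norm_vec_def L2_set_left_distrib)
  finally show ?thesis .
qed

lemma vm_expand:
  fixes A :: "real^'n^'m"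
  shows "x v* A = (\<Sum>i\<in>UNIV. x $ i *\<^sub>R A $ i)"
  by (simp add: vec_eq_iff vector_matrix_mult_def sum_component mult.commute)

lemma vm_norm_le:
  fixes A :: "real^'n^'m"
  shows "norm (x v* A) \<le> norm x * norm A"
proof -
  have "norm (x v* A) \<le> (\<Sum>i\<in>UNIV. norm (x $ i *\<^sub>R A $ i))"
    unfolding vm_expand by (rule norm_sum)
  also have "\<dots> = (\<Sum>i\<in>UNIV. \<bar>x $ i\<bar> * \<bar>norm (A $ i)\<bar>)" by simp
  also have "\<dots> \<le> L2_set (\<lambda>i. x $ i) UNIV * L2_set (\<lambda>i. norm (A $ i)) UNIV"
    by (rule L2_set_mult_ineq)
  also have "\<dots> = norm x * norm A"
    by (simp add: norm_vec_def L2_set_def)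
  finally show ?thesis .
qed

lemma sum_rows_le:
  fixes X :: "real^'n^'m"
  shows "(\<Sum>i\<in>UNIV. norm (X $ i)) \<le> sqrt (real CARD('m)) * norm X"
proof -
  have "(\<Sum>i\<in>UNIV. norm (X $ i)) = (\<Sum>i\<in>UNIV. \<bar>norm (X $ i)\<bar> * \<bar>1\<bar>)" by simp
  also have "\<dots> \<le> L2_set (\<lambda>i. norm (X $ i)) UNIV * L2_set (\<lambda>i::'m. 1) UNIV"
    using L2_set_mult_ineq[of "\<lambda>i. norm (X $ i)" "\<lambda>i. 1::real" UNIV] by simp
  also have "\<dots> = sqrt (real CARD('m)) * norm X"
    by (simp add: norm_vec_def L2_set_constant)
  finally show ?thesis .
qed

lemma vm_sum:
  fixes A :: "'i \<Rightarrow> real^'n^'m"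
  shows "x v* (\<Sum>i\<in>S. A i) = (\<Sum>i\<in>S. x v* A i)"
  by (induction S rule: infinite_finite_induct) (auto simp: algebra_simps)

lemma mv_sum:
  fixes A :: "'i \<Rightarrow> real^'n^'m"
  shows "(\<Sum>i\<in>S. A i) *v x = (\<Sum>i\<in>S. A i *v x)"
  by (induction S rule: infinite_finite_induct) (auto simp: algebra_simps)

lemma scaleR_mv:
  fixes A :: "real^'n^'m"
  shows "(c *\<^sub>R A) *v x = c *\<^sub>R (A *v x)"
  by (simp add: vec_eq_iff matrix_vector_mult_def sum_distrib_left mult.assoc)

lemma loewner_lb:
  assumes "loewner_le (\<mu> *\<^sub>R mat 1) M"
  shows "\<mu> * (v \<bullet> v) \<le> v \<bullet> (M *v v)"
  using assms unfolding loewner_le_def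
  by (auto simp: algebra_simps scaleR_mv inner_diff_right)

lemma loewner_ub:
  assumes "loewner_le M (L *\<^sub>R mat 1)"
  shows "v \<bullet> (M *v v) \<le> L * (v \<bullet> v)"
  using assms unfolding loewner_le_def
  by (auto simp: algebra_simps scaleR_mv inner_diff_right)

lemma Lb_nonneg:
  fixes H :: "real^'n \<Rightarrow> real^'n^'n"
  assumes "\<And>x y. norm (H x - H y) \<le> Lb * norm (x - y)"
  shows "0 \<le> Lb"
proof -
  obtain i :: 'n where True by blast
  define e :: "real^'n" where "e = axis i 1"
  have n: "norm e > 0" by (simp add: e_def)
  have "0 \<le> Lb * norm (e - 0)" using assms[of e 0] norm_ge_zero[of "H e - H 0"] by linarith
  with n show ?thesis by (simp add: zero_le_mult_iff)
qed

lemma grad_taylor: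
  fixes G :: "real^'n \<Rightarrow> real^'n" and H :: "real^'n \<Rightarrow> real^'n^'n"
  assumes G: "\<And>x. (G has_derivative (\<lambda>h. H x *v h)) (at x)"
    and lip: "\<And>x y. norm (H x - H y) \<le> Lb * norm (x - y)"
  shows "norm (G (p + h) - G p - H q *v h) \<le> Lb * norm h * (norm h / 2 + norm (p - q))"
proof -
  have Lb: "0 \<le> Lb" by (rule Lb_nonneg[OF lip])
  define F where "F r = G (p + r *\<^sub>R h) - r *\<^sub>R (H q *v h)" for r
  define \<phi> where "\<phi> r = Lb * norm h * (r^2 / 2 * norm h + r * norm (p - q))" for r
  have dF: "(F has_vector_derivative (H (p + r *\<^sub>R h) *v h - H q *v h)) (at r)" for r
  proof -
    have 1: "((\<lambda>r. p + r *\<^sub>R h) has_derivative (\<lambda>t. t *\<^sub>R h)) (at r)"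
      by (auto intro!: derivative_eq_intros)
    have 2: "((\<lambda>r. G (p + r *\<^sub>R h)) has_derivative (\<lambda>t. H (p + r *\<^sub>R h) *v (t *\<^sub>R h))) (at r)"
      by (rule has_derivative_compose[OF 1 G])
    have 3: "((\<lambda>r. r *\<^sub>R (H q *v h)) has_derivative (\<lambda>t. t *\<^sub>R (H q *v h))) (at r)"
      by (auto intro!: derivative_eq_intros)
    have "(F has_derivative (\<lambda>t. H (p + r *\<^sub>R h) *v (t *\<^sub>R h) - t *\<^sub>R (H q *v h))) (at r)"
      unfolding F_def by (rule has_derivative_diff[OF 2 3])
    then show ?thesis
      by (simp add: has_vector_derivative_def matrix_vector_mult_scaleR algebra_simps)
  qed
  have dphi: "(\<phi> has_vector_derivative (Lb * norm h * (r * norm h + norm (p - q)))) (at r)" for r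
    unfolding \<phi>_def has_vector_derivative_def
    by (auto intro!: derivative_eq_intros simp: algebra_simps)
  have bnd: "norm (H (p + r *\<^sub>R h) *v h - H q *v h) \<le> Lb * norm h * (r * norm h + norm (p - q))"
    if "0 < r" "r < 1" for r
  proof -
    have "norm (H (p + r *\<^sub>R h) *v h - H q *v h) = norm ((H (p + r *\<^sub>R h) - H q) *v h)"
      by (simp add: algebra_simps)
    also have "\<dots> \<le> norm (H (p + r *\<^sub>R h) - H q) * norm h" by (rule mv_norm_le)
    also have "\<dots> \<le> Lb * norm (p + r *\<^sub>R h - q) * norm h"
      by (rule mult_right_mono[OF lip]) simp
    also have "norm (p + r *\<^sub>R h - q) \<le> r * norm h + norm (p - q)"
    proof -
      have "norm (p + r *\<^sub>R h - q) = norm (r *\<^sub>R h + (p - q))" by (simp add: algebra_simps)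
      also have "\<dots> \<le> norm (r *\<^sub>R h) + norm (p - q)" by (rule norm_triangle_ineq)
      finally show ?thesis using that by simp
    qed
    hence "Lb * norm (p + r *\<^sub>R h - q) * norm h \<le> Lb * (r * norm h + norm (p - q)) * norm h"
      by (intro mult_right_mono mult_left_mono Lb) auto
    finally show ?thesis by (simp add: mult_ac)
  qed
  have "norm (F 1 - F 0) \<le> \<phi> 1 - \<phi> 0"
    by (rule differentiable_bound_general[where f' = "\<lambda>r. H (p + r *\<^sub>R h) *v h - H q *v h"
          and \<phi>' = "\<lambda>r. Lb * norm h * (r * norm h + norm (p - q))"])
       (auto intro!: dF dphi bnd continuous_at_imp_continuous_on simp: has_vector_derivative_continuous[OF dF] has_vector_derivative_continuous[OF dphi])
  then show ?thesis by (simp add: F_def \<phi>_def algebra_simps)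
qed

lemma fun_taylor:
  fixes f :: "real^'n \<Rightarrow> real" and G :: "real^'n \<Rightarrow> real^'n" and H :: "real^'n \<Rightarrow> real^'n^'n"
  assumes f: "\<And>x. (f has_derivative (\<lambda>h. G x \<bullet> h)) (at x)"
    and G: "\<And>x. (G has_derivative (\<lambda>h. H x *v h)) (at x)"
    and lip: "\<And>x y. norm (H x - H y) \<le> Lb * norm (x - y)"
  shows "\<bar>f (p + h) - f p - G p \<bullet> h - (h \<bullet> (H p *v h)) / 2\<bar> \<le> Lb / 6 * norm h ^ 3"
proof -
  have Lb: "0 \<le> Lb" by (rule Lb_nonneg[OF lip])
  define F where "F r = f (p + r *\<^sub>R h) - r * (G p \<bullet> h) - r^2 / 2 * (h \<bullet> (H p *v h))" for r
  define \<phi> where "\<phi> r = Lb / 6 * r^3 * norm h ^ 3" for r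
  have dF: "(F has_vector_derivative (G (p + r *\<^sub>R h) \<bullet> h - G p \<bullet> h - r * (h \<bullet> (H p *v h)))) (at r)" for r
  proof -
    have 1: "((\<lambda>r. p + r *\<^sub>R h) has_derivative (\<lambda>t. t *\<^sub>R h)) (at r)"
      by (auto intro!: derivative_eq_intros)
    have 2: "((\<lambda>r. f (p + r *\<^sub>R h)) has_derivative (\<lambda>t. G (p + r *\<^sub>R h) \<bullet> (t *\<^sub>R h))) (at r)"
      by (rule has_derivative_compose[OF 1 f])
    have 3: "((\<lambda>r. r * (G p \<bullet> h) + r^2 / 2 * (h \<bullet> (H p *v h))) has_derivative
        (\<lambda>t. t * (G p \<bullet> h) + t * (r * (h \<bullet> (H p *v h))))) (at r)"
      by (auto intro!: derivative_eq_intros simp: algebra_simps)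
    have "(F has_derivative (\<lambda>t. G (p + r *\<^sub>R h) \<bullet> (t *\<^sub>R h) - (t * (G p \<bullet> h) + t * (r * (h \<bullet> (H p *v h)))))) (at r)"
      unfolding F_def using has_derivative_diff[OF 2 3] by (simp add: algebra_simps)
    then show ?thesis
      by (simp add: has_vector_derivative_def algebra_simps)
  qed
  have dphi: "(\<phi> has_vector_derivative (Lb / 2 * r^2 * norm h ^ 3)) (at r)" for r
    unfolding \<phi>_def has_vector_derivative_def
    by (auto intro!: derivative_eq_intros simp: algebra_simps power2_eq_square)
  have bnd: "norm (G (p + r *\<^sub>R h) \<bullet> h - G p \<bullet> h - r * (h \<bullet> (H p *v h))) \<le> Lb / 2 * r^2 * norm h ^ 3"
    if "0 < r" "r < 1" for r
  proof -
    have "G (p + r *\<^sub>R h) \<bullet> h - G p \<bullet> h - r * (h \<bullet> (H p *v h))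
        = (G (p + r *\<^sub>R h) - G p - H p *v (r *\<^sub>R h)) \<bullet> h"
      by (simp add: algebra_simps inner_commute matrix_vector_mult_scaleR)
    hence "norm (G (p + r *\<^sub>R h) \<bullet> h - G p \<bullet> h - r * (h \<bullet> (H p *v h)))
        \<le> norm (G (p + r *\<^sub>R h) - G p - H p *v (r *\<^sub>R h)) * norm h"
      by (simp add: Cauchy_Schwarz_ineq2)
    also have "\<dots> \<le> (Lb * norm (r *\<^sub>R h) * (norm (r *\<^sub>R h) / 2 + norm (p - p))) * norm h"
      by (rule mult_right_mono[OF grad_taylor[OF G lip]]) simp
    also have "\<dots> = Lb / 2 * r^2 * norm h ^ 3" using that
      by (simp add: power2_eq_square power3_eq_cube)
    finally show ?thesis .
  qed
  have cF: "continuous_on {0..1} F"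
    by (rule continuous_at_imp_continuous_on) (use has_vector_derivative_continuous[OF dF] in auto)
  have cphi: "continuous_on {0..1} \<phi>"
    by (rule continuous_at_imp_continuous_on) (use has_vector_derivative_continuous[OF dphi] in auto)
  have "norm (F 1 - F 0) \<le> \<phi> 1 - \<phi> 0"
    by (rule differentiable_bound_general[OF zero_less_one cF cphi dF dphi bnd])
  then show ?thesis by (simp add: F_def \<phi>_def algebra_simps)
qed

lemma half_abs: fixes P Q B :: real shows "\<bar>P - Q\<bar> \<le> B \<Longrightarrow> 2 * \<bar>P/2 - Q/2\<bar> \<le> B"
  by (cases "P \<ge> Q") auto

lemma path_exp:
  fixes f :: "real^'n \<Rightarrow> real" and G :: "real^'n \<Rightarrow> real^'n" and H :: "real^'n \<Rightarrow> real^'n^'n"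
  assumes f: "\<And>x. (f has_derivative (\<lambda>h. G x \<bullet> h)) (at x)"
    and G: "\<And>x. (G has_derivative (\<lambda>h. H x *v h)) (at x)"
    and lip: "\<And>x y. norm (H x - H y) \<le> Lb * norm (x - y)"
    and t: "0 \<le> t"
  shows "\<bar>f (x + t *\<^sub>R a + t *\<^sub>R b) - f x - t * (G x \<bullet> (a + b))
          - t^2 / 2 * (a \<bullet> (H x *v a) + b \<bullet> (H x *v b)) - t^2 * (b \<bullet> (H x *v a))\<bar>
         \<le> t^3 * (Lb * (norm a^3/6 + norm b^3/6 + norm a^2 * norm b / 2 + norm a * norm b^2 / 2))"
proof -
  have Lb: "0 \<le> Lb" by (rule Lb_nonneg[OF lip])
  define y where "y = x + t *\<^sub>R a"
  have T1: "\<bar>f y - f x - t * (G x \<bullet> a) - t^2/2 * (a \<bullet> (H x *v a))\<bar> \<le> Lb/6 * t^3 * norm a ^ 3"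
    using fun_taylor[OF f G lip, of x "t *\<^sub>R a"] t
    by (simp add: y_def matrix_vector_mult_scaleR power2_eq_square power3_eq_cube mult_ac)
  have T2: "\<bar>f (y + t *\<^sub>R b) - f y - t * (G y \<bullet> b) - t^2/2 * (b \<bullet> (H y *v b))\<bar> \<le> Lb/6 * t^3 * norm b ^ 3"
    using fun_taylor[OF f G lip, of y "t *\<^sub>R b"] t
    by (simp add: matrix_vector_mult_scaleR power2_eq_square power3_eq_cube mult_ac)
  have R0: "norm (G y - G x - H x *v (t *\<^sub>R a)) \<le> Lb * norm (t *\<^sub>R a) * (norm (t *\<^sub>R a) / 2)"
    using grad_taylor[OF G lip, of x "t *\<^sub>R a" x] by (simp add: y_def)
  have "\<bar>(G y - G x - H x *v (t *\<^sub>R a)) \<bullet> (t *\<^sub>R b)\<bar> \<le> norm (G y - G x - H x *v (t *\<^sub>R a)) * norm (t *\<^sub>R b)"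
    by (rule Cauchy_Schwarz_ineq2)
  also have "\<dots> \<le> (Lb * norm (t *\<^sub>R a) * (norm (t *\<^sub>R a) / 2)) * norm (t *\<^sub>R b)"
    by (rule mult_right_mono[OF R0]) simp
  finally have R: "\<bar>t * (G y \<bullet> b) - t * (G x \<bullet> b) - t^2 * (b \<bullet> (H x *v a))\<bar> \<le> Lb/2 * t^3 * norm a^2 * norm b"
    using t by (simp add: inner_diff_left inner_diff_right matrix_vector_mult_scaleR inner_commute power2_eq_square power3_eq_cube mult_ac)
  have "\<bar>(t *\<^sub>R b) \<bullet> ((H y - H x) *v (t *\<^sub>R b))\<bar> \<le> norm (t *\<^sub>R b) * norm ((H y - H x) *v (t *\<^sub>R b))"
    by (rule Cauchy_Schwarz_ineq2)
  also have "\<dots> \<le> norm (t *\<^sub>R b) * (norm (H y - H x) * norm (t *\<^sub>R b))"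
    by (rule mult_left_mono[OF mv_norm_le]) simp
  also have "\<dots> \<le> norm (t *\<^sub>R b) * ((Lb * norm (y - x)) * norm (t *\<^sub>R b))"
    by (intro mult_left_mono mult_right_mono lip) auto
  finally have E: "\<bar>t^2/2 * (b \<bullet> (H y *v b)) - t^2/2 * (b \<bullet> (H x *v b))\<bar> \<le> Lb/2 * t^3 * norm a * norm b^2"
    using t apply (simp add: y_def inner_diff_right matrix_vector_mult_scaleR algebra_simps power2_eq_square power3_eq_cube abs_mult)
    using half_abs by blast
  have eq: "x + t *\<^sub>R a + t *\<^sub>R b = y + t *\<^sub>R b" by (simp add: y_def)
  define e1 where "e1 = f y - f x - t * (G x \<bullet> a) - t^2/2 * (a \<bullet> (H x *v a))"
  define e2 where "e2 = f (y + t *\<^sub>R b) - f y - t * (G y \<bullet> b) - t^2/2 * (b \<bullet> (H y *v b))"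
  define e3 where "e3 = t * (G y \<bullet> b) - t * (G x \<bullet> b) - t^2 * (b \<bullet> (H x *v a))"
  define e4 where "e4 = t^2/2 * (b \<bullet> (H y *v b)) - t^2/2 * (b \<bullet> (H x *v b))"
  have id: "f (y + t *\<^sub>R b) - f x - t * (G x \<bullet> (a + b))
          - t^2 / 2 * (a \<bullet> (H x *v a) + b \<bullet> (H x *v b)) - t^2 * (b \<bullet> (H x *v a)) = e1 + e2 + e3 + e4"
    unfolding e1_def e2_def e3_def e4_def by (simp add: inner_add_right algebra_simps)
  have tri: "\<bar>e1 + e2 + e3 + e4\<bar> \<le> \<bar>e1 + e2 + e3\<bar> + \<bar>e4\<bar>" "\<bar>e1 + e2 + e3\<bar> \<le> \<bar>e1 + e2\<bar> + \<bar>e3\<bar>"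
    "\<bar>e1 + e2\<bar> \<le> \<bar>e1\<bar> + \<bar>e2\<bar>" by (rule abs_triangle_ineq)+
  have bd: "t^3 * (Lb * (norm a^3/6 + norm b^3/6 + norm a^2 * norm b / 2 + norm a * norm b^2 / 2))
     = Lb/6 * t^3 * norm a ^ 3 + Lb/6 * t^3 * norm b ^ 3 + Lb/2 * t^3 * norm a^2 * norm b + Lb/2 * t^3 * norm a * norm b^2"
    by (simp add: algebra_simps)
  show ?thesis
    unfolding eq id bd using tri T1[folded e1_def] T2[folded e2_def] R[folded e3_def] E[folded e4_def] by linarith
qed

lemma hess_sym:
  fixes f :: "real^'n \<Rightarrow> real" and G :: "real^'n \<Rightarrow> real^'n" and H :: "real^'n \<Rightarrow> real^'n^'n"
  assumes f: "\<And>x. (f has_derivative (\<lambda>h. G x \<bullet> h)) (at x)"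
    and G: "\<And>x. (G has_derivative (\<lambda>h. H x *v h)) (at x)"
    and lip: "\<And>x y. norm (H x - H y) \<le> Lb * norm (x - y)"
  shows "v \<bullet> (H x *v u) = u \<bullet> (H x *v v)"
proof -
  have Lb: "0 \<le> Lb" by (rule Lb_nonneg[OF lip])
  define K1 where "K1 = Lb * (norm u^3/6 + norm v^3/6 + norm u^2 * norm v / 2 + norm u * norm v^2 / 2)"
  define K2 where "K2 = Lb * (norm v^3/6 + norm u^3/6 + norm v^2 * norm u / 2 + norm v * norm u^2 / 2)"
  define D where "D = v \<bullet> (H x *v u) - u \<bullet> (H x *v v)"
  have K: "0 \<le> K1 + K2" unfolding K1_def K2_def using Lb by simp
  have bnd: "\<bar>D\<bar> \<le> t * (K1 + K2)" if t: "0 < t" for t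
  proof -
    note p1 = path_exp[OF f G lip, of t x u v, OF less_imp_le[OF t]]
    note p2 = path_exp[OF f G lip, of t x v u, OF less_imp_le[OF t]]
    have e: "x + t *\<^sub>R v + t *\<^sub>R u = x + t *\<^sub>R u + t *\<^sub>R v" by simp
    have e2: "G x \<bullet> (v + u) = G x \<bullet> (u + v)" by (simp add: add.commute)
    have "\<bar>t^2 * D\<bar> \<le> t^3 * K1 + t^3 * K2"
      using p1 p2 t unfolding e e2 K1_def K2_def D_def
      by (simp only: abs_le_iff right_diff_distrib) (simp add: algebra_simps; linarith)
    hence "t^2 * \<bar>D\<bar> \<le> t^2 * (t * (K1 + K2))"
      by (simp add: abs_mult power3_eq_cube power2_eq_square algebra_simps)
    thus ?thesis using t by simp
  qed
  have "D = 0"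
  proof (rule ccontr)
    assume "D \<noteq> 0"
    hence pos: "\<bar>D\<bar> > 0" by simp
    define t where "t = \<bar>D\<bar> / (K1 + K2 + 1)"
    have t: "0 < t" unfolding t_def using pos K by simp
    have "\<bar>D\<bar> \<le> \<bar>D\<bar> / (K1 + K2 + 1) * (K1 + K2)" using bnd[OF t] by (simp add: t_def)
    also have "\<dots> < \<bar>D\<bar>" using pos K by (simp add: field_simps)
    finally show False by simp
  qed
  thus ?thesis by (simp add: D_def)
qed

lemma sym_mv_vm:
  fixes M :: "real^'n^'n"
  assumes "\<And>u v. v \<bullet> (M *v u) = u \<bullet> (M *v v)"
  shows "M *v w = w v* M"
proof -
  have "(M *v w - w v* M) \<bullet> z = 0" for z
    using assms[of w z] by (simp add: inner_diff_left dot_lmul_matrix inner_commute[of "M *v w" z])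
  from this[of "M *v w - w v* M"] show ?thesis by simp
qed

lemma aux1: fixes q r L \<mu> :: real shows "\<mu>*q \<le> r \<Longrightarrow> r \<le> L*q \<Longrightarrow> \<bar>r - (L+\<mu>)/2*q\<bar> \<le> (L-\<mu>)/2*q"
  by (simp add: abs_le_iff field_simps)

lemma sym_bound:
  fixes M :: "real^'n^'n"
  assumes sym: "\<And>u v. v \<bullet> (M *v u) = u \<bullet> (M *v v)"
    and lb: "\<And>z. \<mu> * (z \<bullet> z) \<le> z \<bullet> (M *v z)"
    and ub: "\<And>z. z \<bullet> (M *v z) \<le> L * (z \<bullet> z)"
    and muL: "\<mu> \<le> L" and mu0: "0 \<le> \<mu>"
  shows "norm (M *v v) \<le> L * norm v"
proof -
  define m where "m = (L + \<mu>) / 2"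
  define c where "c = (L - \<mu>) / 2"
  have c0: "0 \<le> c" using muL by (simp add: c_def)
  define S where "S z = M *v z - m *\<^sub>R z" for z
  have QS: "\<bar>z \<bullet> S z\<bar> \<le> c * (z \<bullet> z)" for z
  proof -
    have "z \<bullet> S z = z \<bullet> (M *v z) - m * (z \<bullet> z)" by (simp add: S_def inner_diff_right)
    thus ?thesis using aux1[OF lb[of z] ub[of z]] by (simp add: m_def c_def)
  qed
  have pol: "4 * (x \<bullet> S y) = (x + y) \<bullet> S (x + y) - (x - y) \<bullet> S (x - y)" for x y
    using sym[of y x] by (simp add: S_def inner_add_left inner_add_right inner_diff_left inner_diff_right
        matrix_vector_right_distrib matrix_vector_mult_diff_distrib algebra_simps inner_commute)
  have key: "4 * (x \<bullet> S y) \<le> 2 * c * (x \<bullet> x + y \<bullet> y)" for x y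
  proof -
    have "4 * (x \<bullet> S y) \<le> c * ((x + y) \<bullet> (x + y)) + c * ((x - y) \<bullet> (x - y))"
      unfolding pol using QS[of "x + y"] QS[of "x - y"] by (simp add: abs_le_iff)
    also have "\<dots> = 2 * c * (x \<bullet> x + y \<bullet> y)"
      by (simp add: inner_add_left inner_add_right inner_diff_left inner_diff_right algebra_simps inner_commute)
    finally show ?thesis .
  qed
  define a where "a = norm (S v)"
  define b where "b = norm v"
  have Sv: "norm (S v) \<le> c * norm v"
  proof (cases "a = 0 \<or> b = 0")
    case True
    then show ?thesis using c0 by (auto simp: a_def b_def S_def)
  next
    case False
    hence a: "a > 0" and b: "b > 0" by (auto simp: a_def b_def)
    have Sl: "S (a *\<^sub>R v) = a *\<^sub>R S v" by (simp add: S_def matrix_vector_mult_scaleR algebra_simps)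
    have "4 * ((b *\<^sub>R S v) \<bullet> S (a *\<^sub>R v)) \<le> 2 * c * ((b *\<^sub>R S v) \<bullet> (b *\<^sub>R S v) + (a *\<^sub>R v) \<bullet> (a *\<^sub>R v))"
      by (rule key)
    hence "4 * (b * a * (S v \<bullet> S v)) \<le> 2 * c * (b * b * (S v \<bullet> S v) + a * a * (v \<bullet> v))"
      unfolding Sl by (simp add: algebra_simps)
    hence "4 * (b * a * (a * a)) \<le> 2 * c * (b * b * (a * a) + a * a * (b * b))"
      by (simp add: a_def b_def flip: power2_norm_eq_inner power2_eq_square)
    hence "(a * a * b) * a \<le> (a * a * b) * (c * b)" by (simp add: algebra_simps)
    hence "a \<le> c * b" using a b by (simp add: mult_le_cancel_left)
    thus ?thesis by (simp add: a_def b_def)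
  qed
  have "M *v v = S v + m *\<^sub>R v" by (simp add: S_def)
  hence "norm (M *v v) \<le> norm (S v) + norm (m *\<^sub>R v)" by (metis norm_triangle_ineq)
  also have "\<dots> \<le> c * norm v + \<bar>m\<bar> * norm v" using Sv by simp
  also have "\<dots> \<le> L * norm v"
  proof -
    have "c + \<bar>m\<bar> \<le> L" using muL mu0 by (simp add: c_def m_def field_simps)
    thus ?thesis by (metis distrib_right mult_right_mono norm_ge_zero)
  qed
  finally show ?thesis .
qed

lemma pd_invertible:
  fixes M :: "real^'n^'n"
  assumes lb: "\<And>z. \<mu> * (z \<bullet> z) \<le> z \<bullet> (M *v z)" and mu: "0 < \<mu>"
  shows "invertible M"
proof -
  have "\<forall>x. M *v x = 0 \<longrightarrow> x = 0"
  proof (intro allI impI)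
    fix x assume "M *v x = 0"
    with lb[of x] have "\<mu> * (x \<bullet> x) \<le> 0" by simp
    with mu have "x \<bullet> x \<le> 0" by (simp add: mult_le_0_iff)
    thus "x = 0" by (metis inner_gt_zero_iff not_le)
  qed
  thus ?thesis unfolding invertible_left_inverse matrix_left_invertible_ker[symmetric] .
qed

lemma matrix_inv_props:
  fixes M :: "real^'n^'n"
  assumes "invertible M"
  shows "M ** matrix_inv M = mat 1" "matrix_inv M ** M = mat 1"
proof -
  have "\<exists>A'. M ** A' = mat 1 \<and> A' ** M = mat 1" using assms unfolding invertible_def .
  hence "M ** matrix_inv M = mat 1 \<and> matrix_inv M ** M = mat 1"
    unfolding matrix_inv_def by (rule someI_ex)
  thus "M ** matrix_inv M = mat 1" "matrix_inv M ** M = mat 1" by auto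
qed

lemma inv_bound:
  fixes M :: "real^'n^'n"
  assumes lb: "\<And>z. \<mu> * (z \<bullet> z) \<le> z \<bullet> (M *v z)" and mu: "0 < \<mu>"
  shows "norm (w v* matrix_inv M) \<le> norm w / \<mu>"
proof -
  have inv: "invertible M" by (rule pd_invertible[OF lb mu])
  define z where "z = w v* matrix_inv M"
  have zM: "z v* M = w" unfolding z_def vector_matrix_mul_assoc matrix_inv_props(2)[OF inv] by simp
  have "\<mu> * (norm z * norm z) \<le> z \<bullet> (M *v z)" using lb[of z] by (simp add: power2_norm_eq_inner[symmetric] power2_eq_square)
  also have "\<dots> = w \<bullet> z" using zM by (metis dot_lmul_matrix)
  also have "\<dots> \<le> norm w * norm z" by (rule Cauchy_Schwarz_ineq2[THEN order_trans[OF abs_ge_self]])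
  finally have "(\<mu> * norm z) * norm z \<le> norm w * norm z" by (simp add: mult_ac)
  hence "\<mu> * norm z \<le> norm w"
    by (cases "norm z = 0") (use mu in \<open>auto simp: mult_le_cancel_right\<close>)
  thus ?thesis using mu by (simp add: z_def field_simps)
qed

lemma inv_pos:
  fixes M :: "real^'n^'n"
  assumes lb: "\<And>z. \<mu> * (z \<bullet> z) \<le> z \<bullet> (M *v z)" and mu: "0 < \<mu>"
  shows "\<mu> * ((matrix_inv M *v v) \<bullet> (matrix_inv M *v v)) \<le> v \<bullet> (matrix_inv M *v v)"
    and "M *v (matrix_inv M *v v) = v"
proof -
  have inv: "invertible M" by (rule pd_invertible[OF lb mu])
  show Mu: "M *v (matrix_inv M *v v) = v"
    by (simp add: matrix_vector_mul_assoc matrix_inv_props(1)[OF inv])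
  have "\<mu> * ((matrix_inv M *v v) \<bullet> (matrix_inv M *v v)) \<le> (matrix_inv M *v v) \<bullet> (M *v (matrix_inv M *v v))"
    using lb by simp
  also have "\<dots> = v \<bullet> (matrix_inv M *v v)" by (simp add: Mu inner_commute)
  finally show "\<mu> * ((matrix_inv M *v v) \<bullet> (matrix_inv M *v v)) \<le> v \<bullet> (matrix_inv M *v v)" .
qed

lemma avg_inv_invertible:
  fixes Ms :: "'m::finite \<Rightarrow> real^'n^'n"
  assumes lb: "\<And>i z. \<mu> * (z \<bullet> z) \<le> z \<bullet> (Ms i *v z)" and mu: "0 < \<mu>"
  shows "invertible ((1 / real CARD('m)) *\<^sub>R (\<Sum>i\<in>UNIV. matrix_inv (Ms i)))"
proof -
  let ?A = "(1 / real CARD('m)) *\<^sub>R (\<Sum>i\<in>UNIV. matrix_inv (Ms i))"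
  have "\<forall>x. ?A *v x = 0 \<longrightarrow> x = 0"
  proof (intro allI impI)
    fix v assume A0: "?A *v v = 0"
    have nn: "0 \<le> v \<bullet> (matrix_inv (Ms i) *v v)" for i
      using inv_pos(1)[OF lb mu, of i v] mu by (metis inner_ge_zero mult_nonneg_nonneg order_trans less_imp_le)
    have "?A *v v = (1 / real CARD('m)) *\<^sub>R (\<Sum>i\<in>UNIV. matrix_inv (Ms i) *v v)"
      by (simp add: scaleR_mv mv_sum)
    hence "(\<Sum>i\<in>UNIV. matrix_inv (Ms i) *v v) = 0" using A0 by simp
    hence "(\<Sum>i\<in>UNIV. v \<bullet> (matrix_inv (Ms i) *v v)) = 0" by (simp add: inner_sum_right[symmetric])
    hence all0: "\<forall>i\<in>UNIV. v \<bullet> (matrix_inv (Ms i) *v v) = 0" using nn by (simp add: sum_nonneg_eq_0_iff)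
    obtain i :: 'm where True by blast
    have "\<mu> * ((matrix_inv (Ms i) *v v) \<bullet> (matrix_inv (Ms i) *v v)) \<le> 0"
      using inv_pos(1)[OF lb mu, of i v] all0 by simp
    hence "(matrix_inv (Ms i) *v v) \<bullet> (matrix_inv (Ms i) *v v) \<le> 0" using mu by (simp add: mult_le_0_iff)
    hence "matrix_inv (Ms i) *v v = 0" by (metis inner_gt_zero_iff not_le)
    thus "v = 0" using inv_pos(2)[OF lb mu, of i v] by simp
  qed
  thus ?thesis unfolding invertible_left_inverse matrix_left_invertible_ker[symmetric] .
qed

lemma avg_inv_bound:
  fixes Ms :: "'m::finite \<Rightarrow> real^'n^'n"
  assumes lb: "\<And>i z. \<mu> * (z \<bullet> z) \<le> z \<bullet> (Ms i *v z)" and mu: "0 < \<mu>"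
  shows "norm (w v* ((1 / real CARD('m)) *\<^sub>R (\<Sum>i\<in>UNIV. matrix_inv (Ms i)))) \<le> norm w / \<mu>"
proof -
  have "w v* ((1 / real CARD('m)) *\<^sub>R (\<Sum>i\<in>UNIV. matrix_inv (Ms i)))
      = (1 / real CARD('m)) *\<^sub>R (\<Sum>i\<in>UNIV. w v* matrix_inv (Ms i))"
    by (simp add: vector_scaleR_matrix_ac vm_sum)
  hence "norm (w v* ((1 / real CARD('m)) *\<^sub>R (\<Sum>i\<in>UNIV. matrix_inv (Ms i))))
      = (1 / real CARD('m)) * norm (\<Sum>i\<in>UNIV. w v* matrix_inv (Ms i))" by simp
  also have "\<dots> \<le> (1 / real CARD('m)) * (\<Sum>i\<in>UNIV. norm (w v* matrix_inv (Ms i)))"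
    by (intro mult_left_mono norm_sum) simp
  also have "\<dots> \<le> (1 / real CARD('m)) * (\<Sum>i\<in>(UNIV::'m set). norm w / \<mu>)"
    by (intro mult_left_mono sum_mono inv_bound[OF lb mu]) simp
  also have "\<dots> = norm w / \<mu>" by simp
  finally show ?thesis .
qed

lemma grad_lip:
  fixes G :: "real^'n \<Rightarrow> real^'n" and H :: "real^'n \<Rightarrow> real^'n^'n"
  assumes G: "\<And>x. (G has_derivative (\<lambda>h. H x *v h)) (at x)"
    and bd: "\<And>x v. norm (H x *v v) \<le> L * norm v"
  shows "norm (G a - G b) \<le> L * norm (a - b)"
proof (rule differentiable_bound[where S = UNIV and f' = "\<lambda>x h. H x *v h"])
  show "\<And>x. x \<in> UNIV \<Longrightarrow> (G has_derivative (\<lambda>h. H x *v h)) (at x within UNIV)" using G by simp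
  show "\<And>x. x \<in> UNIV \<Longrightarrow> onorm (\<lambda>h. H x *v h) \<le> L" by (rule onorm_le) (simp add: bd)
qed auto

lemma grad_zero:
  fixes f :: "'m::finite \<Rightarrow> real^'n \<Rightarrow> real" and grad :: "'m \<Rightarrow> real^'n \<Rightarrow> real^'n"
  assumes grad: "\<And>i x. (f i has_derivative (\<lambda>h. grad i x \<bullet> h)) (at x)"
    and mn: "\<forall>x. (\<Sum>i\<in>UNIV. f i xstar) / real CARD('m) \<le> (\<Sum>i\<in>UNIV. f i x) / real CARD('m)"
  shows "(\<Sum>i\<in>UNIV. grad i xstar) = 0"
proof -
  have d: "((\<lambda>x. \<Sum>i\<in>UNIV. f i x) has_derivative (\<lambda>h. \<Sum>i\<in>UNIV. grad i xstar \<bullet> h)) (at xstar)"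
    by (rule has_derivative_sum) (rule grad)
  have "\<forall>x. (\<Sum>i\<in>UNIV. f i xstar) \<le> (\<Sum>i\<in>UNIV. f i x)"
    using mn by (simp add: divide_le_cancel)
  hence "eventually (\<lambda>y. (\<Sum>i\<in>UNIV. f i xstar) \<le> (\<Sum>i\<in>UNIV. f i y)) (at xstar)" by simp
  from has_derivative_local_min[OF d this]
  have "(\<lambda>h. \<Sum>i\<in>UNIV. grad i xstar \<bullet> h) = (\<lambda>h. 0)" .
  hence "(\<Sum>i\<in>UNIV. grad i xstar \<bullet> (\<Sum>i\<in>UNIV. grad i xstar)) = 0" by meson
  hence "(\<Sum>i\<in>UNIV. grad i xstar) \<bullet> (\<Sum>i\<in>UNIV. grad i xstar) = 0" by (simp add: inner_sum_left)
  thus ?thesis by simp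
qed

lemma row_avg_W:
  fixes W :: "real^'m::finite^'m" and X :: "real^'n^'m"
  assumes "doubly_stochastic W"
  shows "row_avg (W ** X) = row_avg X"
proof -
  have cs: "\<And>j. (\<Sum>i\<in>UNIV. W $ i $ j) = 1" using assms by (simp add: doubly_stochastic_def)
  have "(\<Sum>i\<in>UNIV. (W ** X) $ i) = (\<Sum>i\<in>UNIV. X $ i)"
  unfolding vec_eq_iff proof
    fix c
    have "(\<Sum>i\<in>UNIV. (W ** X) $ i) $ c = (\<Sum>i\<in>UNIV. \<Sum>j\<in>UNIV. W $ i $ j * X $ j $ c)"
      by (simp add: sum_component matrix_matrix_mult_def)
    also have "\<dots> = (\<Sum>j\<in>UNIV. (\<Sum>i\<in>UNIV. W $ i $ j) * X $ j $ c)"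
      by (subst sum.swap) (simp add: sum_distrib_right)
    also have "\<dots> = (\<Sum>i\<in>UNIV. X $ i) $ c" by (simp add: cs sum_component)
    finally show "(\<Sum>i\<in>UNIV. (W ** X) $ i) $ c = (\<Sum>i\<in>UNIV. X $ i) $ c" .
  qed
  thus ?thesis by (simp add: row_avg_def)
qed

lemma row_avg_diff: "row_avg (A - c *\<^sub>R B) = row_avg A - c *\<^sub>R row_avg (B :: real^'n^'m::finite)"
  by (simp add: row_avg_def sum_subtractf scaleR_sum_right[symmetric] algebra_simps)

lemma row_avg_chi: "row_avg (\<chi> i. F i) = (1 / real CARD('m)) *\<^sub>R (\<Sum>i\<in>(UNIV::'m::finite set). F i)"
  by (simp add: row_avg_def)

lemma ones_row_nth: "(X - ones_row v) $ i = X $ i - v"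
  by (simp add: ones_row_def)

theorem theorem3:
  fixes f :: "'m::finite \<Rightarrow> real^'n::finite \<Rightarrow> real"
    and grad :: "'m \<Rightarrow> real^'n \<Rightarrow> real^'n"
    and hess :: "'m \<Rightarrow> real^'n \<Rightarrow> real^'n^'n"
    and \<mu> L Lbar \<gamma> \<eta> :: real
    and xstar :: "real^'n"
    and W :: "real^'m^'m"
    and E :: "'m \<Rightarrow> 'm \<Rightarrow> bool"
    and xs ss :: "nat \<Rightarrow> real^'n^'m"
    and k :: nat
  assumes N2: "CARD('m) \<ge> 2"
    and grad: "\<And>i x. (f i has_derivative (\<lambda>h. grad i x \<bullet> h)) (at x)"
    and hess: "\<And>i x. (grad i has_derivative (\<lambda>h. hess i x *v h)) (at x)"
    and hess_cont: "\<And>i. continuous_on UNIV (hess i)"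
    and mu_pos: "0 < \<mu>" and mu_L: "\<mu> \<le> L"
    and hess_lb: "\<And>i x. loewner_le (\<mu> *\<^sub>R mat 1) (hess i x)"
    and hess_ub: "\<And>i x. loewner_le (hess i x) (L *\<^sub>R mat 1)"
    and hess_lip: "\<And>i x y. norm (hess i x - hess i y) \<le> Lbar * norm (x - y)"
    and xstar_min: "\<forall>x. (\<Sum>i\<in>UNIV. f i xstar) / real CARD('m) \<le> (\<Sum>i\<in>UNIV. f i x) / real CARD('m)"
    and xstar_unique: "\<forall>y. (\<forall>x. (\<Sum>i\<in>UNIV. f i y) / real CARD('m) \<le> (\<Sum>i\<in>UNIV. f i x) / real CARD('m)) \<longrightarrow> y = xstar"
    and gamma: "\<And>X :: real^'n^'m.
       norm ((1 / real CARD('m)) *\<^sub>R (\<Sum>i\<in>UNIV. hess i (X $ i))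
             - matrix_inv ((1 / real CARD('m)) *\<^sub>R (\<Sum>i\<in>UNIV. matrix_inv (hess i (X $ i))))) \<le> \<gamma>"
    and W_sym: "transpose W = W"
    and W_ds: "doubly_stochastic W"
    and W_graph: "consensus_matrix_of E W"
    and sigma: "spec_norm (W - avg_mat) < 1"
    and x_step: "\<And>j. xs (Suc j) = W ** xs j
                   - \<eta> *\<^sub>R (\<chi> i. (ss j $ i) v* matrix_inv (hess i (xs j $ i)))"
    and s_step: "\<And>j. ss (Suc j) = W ** ss j + (\<chi> i. grad i (xs (Suc j) $ i))
                   - (\<chi> i. grad i (xs j $ i))"
    and s_init: "ss 0 = (\<chi> i. grad i (xs 0 $ i))"
    and gamma_mu: "\<gamma> < \<mu>"
    and eta: "0 < \<eta>" "\<eta> < 1"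
  shows "norm (row_avg (xs (Suc k)) - xstar)
     \<le> (1 - \<eta> * (1 - \<gamma> / \<mu>)) * norm (row_avg (xs k) - xstar)
       + \<eta> * Lbar / (\<mu> * sqrt (real CARD('m))) * norm (xs k - ones_row (row_avg (xs k)))
           * norm (row_avg (xs k) - xstar)
       + \<eta> * Lbar / (2 * \<mu>) * (norm (row_avg (xs k) - xstar))\<^sup>2
       + \<eta> / (\<mu> * sqrt (real CARD('m)))
           * norm (ss k - ones_row (row_avg (\<chi> i. grad i (xs k $ i))))
       + \<eta> * L / (\<mu> * sqrt (real CARD('m))) * norm (xs k - ones_row (row_avg (xs k)))"
proof -
  define N where "N = real CARD('m)"
  have Npos: "N > 0" by (simp add: N_def)
  have sN: "sqrt N > 0" using Npos by simp
  have NsN: "N = sqrt N * sqrt N" using Npos by simp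
  define X where "X = xs k"
  define S where "S = ss k"
  define Hm where "Hm i = hess i (X $ i)" for i
  define Ii where "Ii i = matrix_inv (Hm i)" for i
  define A where "A = (1 / N) *\<^sub>R (\<Sum>i\<in>UNIV. Ii i)"
  define Happ where "Happ = matrix_inv A"
  define Htr where "Htr = (1 / N) *\<^sub>R (\<Sum>i\<in>UNIV. Hm i)"
  define xb where "xb = row_avg X"
  define d where "d = xb - xstar"
  define g where "g = row_avg (\<chi> i. grad i (X $ i))"
  define gx where "gx = (1 / N) *\<^sub>R (\<Sum>i\<in>UNIV. grad i xb)"
  define Xn where "Xn = norm (X - ones_row xb)"
  define Sn where "Sn = norm (S - ones_row g)"
  define sx where "sx = (\<Sum>i\<in>UNIV. norm (X $ i - xb))"
  define sg where "sg = (\<Sum>i\<in>UNIV. norm (S $ i - g))"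
  define T where "T = norm d"
  have lbv: "\<And>i x z. \<mu> * (z \<bullet> z) \<le> z \<bullet> (hess i x *v z)"
    using hess_lb by (rule loewner_lb)
  have ubv: "\<And>i x z. z \<bullet> (hess i x *v z) \<le> L * (z \<bullet> z)"
    using hess_ub by (rule loewner_ub)
  have symv: "\<And>i x u v. v \<bullet> (hess i x *v u) = u \<bullet> (hess i x *v v)"
    by (rule hess_sym[OF grad hess hess_lip])
  have Lbd: "\<And>i x v. norm (hess i x *v v) \<le> L * norm v"
    by (rule sym_bound[OF symv lbv ubv mu_L]) (use mu_pos in simp)
  have glip: "\<And>i a b. norm (grad i a - grad i b) \<le> L * norm (a - b)"
    by (rule grad_lip[OF hess Lbd])
  have Lb0: "0 \<le> Lbar" by (rule Lb_nonneg[OF hess_lip])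
  have L0: "0 \<le> L" using mu_pos mu_L by simp
  have lbH: "\<And>i z. \<mu> * (z \<bullet> z) \<le> z \<bullet> (Hm i *v z)" by (simp add: Hm_def lbv)
  have Ainv: "invertible A"
    unfolding A_def Ii_def N_def by (rule avg_inv_invertible[OF lbH mu_pos])
  have Abd: "\<And>w. norm (w v* A) \<le> norm w / \<mu>"
    unfolding A_def Ii_def N_def by (rule avg_inv_bound[OF lbH mu_pos])
  have gam: "norm (Htr - Happ) \<le> \<gamma>"
    using gamma[of X] by (simp add: Htr_def Happ_def A_def Ii_def Hm_def N_def)
  have sxb: "sx \<le> sqrt N * Xn"
    using sum_rows_le[of "X - ones_row xb"] by (simp add: sx_def Xn_def N_def ones_row_def)
  have sgb: "sg \<le> sqrt N * Sn"
    using sum_rows_le[of "S - ones_row g"] by (simp add: sg_def Sn_def N_def ones_row_def)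
  have sxN: "sx / N \<le> Xn / sqrt N"
  proof -
    have "sx / N \<le> sqrt N * Xn / N" using sxb Npos by (simp add: divide_right_mono)
    also have "\<dots> = Xn / sqrt N" using sN by (subst NsN) (simp add: field_simps)
    finally show ?thesis .
  qed
  have sgN: "sg / N \<le> Sn / sqrt N"
  proof -
    have "sg / N \<le> sqrt N * Sn / N" using sgb Npos by (simp add: divide_right_mono)
    also have "\<dots> = Sn / sqrt N" using sN by (subst NsN) (simp add: field_simps)
    finally show ?thesis .
  qed
  have step1: "row_avg (xs (Suc k)) = xb - \<eta> *\<^sub>R ((1 / N) *\<^sub>R (\<Sum>i\<in>UNIV. S $ i v* Ii i))"
    unfolding x_step row_avg_diff row_avg_W[OF W_ds]
    by (simp add: row_avg_chi xb_def X_def S_def Ii_def Hm_def N_def)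
  define e where "e = (1 / N) *\<^sub>R (\<Sum>i\<in>UNIV. (S $ i - g) v* Ii i)"
  have step2: "(1 / N) *\<^sub>R (\<Sum>i\<in>UNIV. S $ i v* Ii i) = e + g v* A"
  proof -
    have "(\<Sum>i\<in>UNIV. S $ i v* Ii i) = (\<Sum>i\<in>UNIV. (S $ i - g) v* Ii i) + (\<Sum>i\<in>UNIV. g v* Ii i)"
      by (simp add: vector_matrix_mult_diff_distrib sum_subtractf)
    moreover have "g v* A = (1 / N) *\<^sub>R (\<Sum>i\<in>UNIV. g v* Ii i)"
      by (simp add: A_def vector_scaleR_matrix_ac vm_sum)
    ultimately show ?thesis by (simp add: e_def scaleR_add_right)
  qed
  have ebd: "norm e \<le> sg / (N * \<mu>)"
  proof -
    have "norm e = (1 / N) * norm (\<Sum>i\<in>UNIV. (S $ i - g) v* Ii i)" using Npos by (simp add: e_def)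
    also have "\<dots> \<le> (1 / N) * (\<Sum>i\<in>UNIV. norm ((S $ i - g) v* Ii i))"
      by (intro mult_left_mono norm_sum) (use Npos in simp)
    also have "\<dots> \<le> (1 / N) * (\<Sum>i\<in>UNIV. norm (S $ i - g) / \<mu>)"
      by (intro mult_left_mono sum_mono) (use Npos inv_bound[OF lbH mu_pos] in \<open>auto simp: Ii_def\<close>)
    also have "\<dots> = sg / (N * \<mu>)" by (simp add: sg_def sum_divide_distrib mult.commute)
    finally show ?thesis .
  qed
  define rr where "rr = gx - Htr *v d"
  have gz: "(\<Sum>i\<in>UNIV. grad i xstar) = 0" by (rule grad_zero[OF grad xstar_min])
  have rr_eq: "rr = (1 / N) *\<^sub>R (\<Sum>i\<in>UNIV. grad i xb - grad i xstar - Hm i *v d)"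
    by (simp add: rr_def gx_def Htr_def gz sum_subtractf scaleR_mv mv_sum scaleR_diff_right)
  have rbd: "norm rr \<le> Lbar * T * T / 2 + Lbar * T * (sx / N)"
  proof -
    have each: "norm (grad i xb - grad i xstar - Hm i *v d) \<le> Lbar * T * (T / 2 + norm (X $ i - xb))" for i
    proof -
      have "norm (grad i (xb + - d) - grad i xb - Hm i *v (- d)) \<le> Lbar * norm (- d) * (norm (- d) / 2 + norm (xb - X $ i))"
        unfolding Hm_def by (rule grad_taylor[OF hess hess_lip])
      moreover have neg: "Hm i *v (- d) = - (Hm i *v d)"
        using matrix_vector_mult_diff_distrib[of "Hm i" 0 d] by simp
      have "grad i (xb + - d) - grad i xb - Hm i *v (- d) = - (grad i xb - grad i xstar - Hm i *v d)"
        unfolding neg by (simp add: d_def)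
      hence "norm (grad i xb - grad i xstar - Hm i *v d) = norm (grad i (xb + - d) - grad i xb - Hm i *v (- d))"
        by (metis norm_minus_cancel)
      ultimately show ?thesis by (simp add: T_def norm_minus_commute)
    qed
    have "norm rr = (1 / N) * norm (\<Sum>i\<in>UNIV. grad i xb - grad i xstar - Hm i *v d)"
      using Npos by (simp add: rr_eq)
    also have "\<dots> \<le> (1 / N) * (\<Sum>i\<in>UNIV. norm (grad i xb - grad i xstar - Hm i *v d))"
      by (intro mult_left_mono norm_sum) (use Npos in simp)
    also have "\<dots> \<le> (1 / N) * (\<Sum>i\<in>UNIV. Lbar * T * (T / 2 + norm (X $ i - xb)))"
      by (intro mult_left_mono sum_mono each) (use Npos in simp)
    also have "(\<Sum>i\<in>UNIV. Lbar * T * (T / 2 + norm (X $ i - xb))) = N * (Lbar * T * T / 2) + Lbar * T * sx"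
      by (simp add: distrib_left sum.distrib sum_distrib_left[symmetric] sx_def N_def)
    also have "(1 / N) * (N * (Lbar * T * T / 2) + Lbar * T * sx) = Lbar * T * T / 2 + Lbar * T * (sx / N)"
      using Npos by (simp add: field_simps)
    finally show ?thesis .
  qed
  have ggbd: "norm (g - gx) \<le> L * (sx / N)"
  proof -
    have "g - gx = (1 / N) *\<^sub>R (\<Sum>i\<in>UNIV. grad i (X $ i) - grad i xb)"
      by (simp add: g_def gx_def row_avg_chi N_def sum_subtractf scaleR_diff_right)
    hence "norm (g - gx) = (1 / N) * norm (\<Sum>i\<in>UNIV. grad i (X $ i) - grad i xb)"
      using Npos by simp
    also have "\<dots> \<le> (1 / N) * (\<Sum>i\<in>UNIV. norm (grad i (X $ i) - grad i xb))"
      by (intro mult_left_mono norm_sum) (use Npos in simp)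
    also have "\<dots> \<le> (1 / N) * (\<Sum>i\<in>UNIV. L * norm (X $ i - xb))"
      by (intro mult_left_mono sum_mono glip) (use Npos in simp)
    also have "\<dots> = L * (sx / N)" by (simp add: sx_def sum_distrib_left[symmetric])
    finally show ?thesis .
  qed
  have Htr_sym: "Htr *v d = d v* Htr"
  proof -
    have "Htr *v d = (1 / N) *\<^sub>R (\<Sum>i\<in>UNIV. Hm i *v d)" by (simp add: Htr_def scaleR_mv mv_sum)
    also have "\<dots> = (1 / N) *\<^sub>R (\<Sum>i\<in>UNIV. d v* Hm i)"
      unfolding Hm_def by (subst sym_mv_vm[OF symv]) (rule refl)
    also have "\<dots> = d v* Htr" by (simp add: Htr_def vector_scaleR_matrix_ac vm_sum)
    finally show ?thesis .
  qed
  have HA: "(Htr *v d) v* A = (d v* (Htr - Happ)) v* A + d"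
  proof -
    have "(Htr *v d) v* A = (d v* (Htr - Happ)) v* A + (d v* Happ) v* A"
      by (simp add: Htr_sym vector_matrix_mult_diff_rdistrib vector_matrix_left_distrib[symmetric])
    also have "(d v* Happ) v* A = d"
      by (simp add: vector_matrix_mul_assoc Happ_def matrix_inv_props(2)[OF Ainv])
    finally show ?thesis .
  qed
  define P1 where "P1 = (d v* (Htr - Happ)) v* A"
  define P2 where "P2 = rr v* A"
  define P3 where "P3 = (g - gx) v* A"
  have gdec: "g = Htr *v d + rr + (g - gx)" by (simp add: rr_def)
  have final_eq: "row_avg (xs (Suc k)) - xstar = (1 - \<eta>) *\<^sub>R d - \<eta> *\<^sub>R (P1 + P2 + P3 + e)"
  proof -
    have gA: "g v* A = P1 + d + P2 + P3"
      by (subst gdec) (simp add: vector_matrix_left_distrib HA P1_def P2_def P3_def)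
    show ?thesis unfolding step1 step2 gA by (simp add: d_def algebra_simps)
  qed
  have P1b: "norm P1 \<le> \<gamma> * T / \<mu>"
  proof -
    have "norm P1 \<le> norm (d v* (Htr - Happ)) / \<mu>" unfolding P1_def by (rule Abd)
    also have "\<dots> \<le> (T * \<gamma>) / \<mu>"
    proof (rule divide_right_mono)
      show "norm (d v* (Htr - Happ)) \<le> T * \<gamma>"
        using vm_norm_le[of d "Htr - Happ"] mult_left_mono[OF gam norm_ge_zero[of d]]
        unfolding T_def by linarith
    qed (use mu_pos in simp)
    finally show ?thesis by (simp add: mult.commute)
  qed
  have P2b: "norm P2 \<le> (Lbar * T * T / 2 + Lbar * T * (Xn / sqrt N)) / \<mu>"
  proof -
    have "norm P2 \<le> norm rr / \<mu>" unfolding P2_def by (rule Abd)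
    also have "\<dots> \<le> (Lbar * T * T / 2 + Lbar * T * (Xn / sqrt N)) / \<mu>"
    proof (rule divide_right_mono)
      have "Lbar * T * (sx / N) \<le> Lbar * T * (Xn / sqrt N)"
        using sxN Lb0 by (intro mult_left_mono) (auto simp: T_def)
      thus "norm rr \<le> Lbar * T * T / 2 + Lbar * T * (Xn / sqrt N)" using rbd by linarith
    qed (use mu_pos in simp)
    finally show ?thesis .
  qed
  have P3b: "norm P3 \<le> L * (Xn / sqrt N) / \<mu>"
  proof -
    have "norm P3 \<le> norm (g - gx) / \<mu>" unfolding P3_def by (rule Abd)
    also have "\<dots> \<le> L * (Xn / sqrt N) / \<mu>"
    proof (rule divide_right_mono)
      show "norm (g - gx) \<le> L * (Xn / sqrt N)"
        using ggbd mult_left_mono[OF sxN L0] by linarith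
    qed (use mu_pos in simp)
    finally show ?thesis .
  qed
  have eb: "norm e \<le> (Sn / sqrt N) / \<mu>"
  proof -
    have "sg / (N * \<mu>) = (sg / N) / \<mu>" by simp
    also have "\<dots> \<le> (Sn / sqrt N) / \<mu>" using divide_right_mono[OF sgN, of \<mu>] mu_pos by simp
    finally show ?thesis using ebd by linarith
  qed
  have "norm (row_avg (xs (Suc k)) - xstar) \<le> norm ((1 - \<eta>) *\<^sub>R d) + norm (\<eta> *\<^sub>R (P1 + P2 + P3 + e))"
    unfolding final_eq by (rule norm_triangle_ineq4)
  also have "\<dots> = (1 - \<eta>) * T + \<eta> * norm (P1 + P2 + P3 + e)"
    using eta by (simp add: T_def)
  also have "\<dots> \<le> (1 - \<eta>) * T + \<eta> * (\<gamma> * T / \<mu> + (Lbar * T * T / 2 + Lbar * T * (Xn / sqrt N)) / \<mu>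
        + L * (Xn / sqrt N) / \<mu> + (Sn / sqrt N) / \<mu>)"
  proof -
    have "norm (P1 + P2 + P3 + e) \<le> norm P1 + norm P2 + norm P3 + norm e"
      by (meson add_mono norm_triangle_ineq order_trans order_refl)
    hence "norm (P1 + P2 + P3 + e) \<le> \<gamma> * T / \<mu> + (Lbar * T * T / 2 + Lbar * T * (Xn / sqrt N)) / \<mu>
        + L * (Xn / sqrt N) / \<mu> + (Sn / sqrt N) / \<mu>"
      using P1b P2b P3b eb by linarith
    thus ?thesis using eta by (intro add_left_mono mult_left_mono) auto
  qed
  also have "\<dots> = (1 - \<eta> * (1 - \<gamma> / \<mu>)) * T
       + \<eta> * Lbar / (\<mu> * sqrt N) * Xn * T
       + \<eta> * Lbar / (2 * \<mu>) * T\<^sup>2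
       + \<eta> / (\<mu> * sqrt N) * Sn
       + \<eta> * L / (\<mu> * sqrt N) * Xn"
    using mu_pos sN by (simp add: field_simps power2_eq_square)
  finally show ?thesis
    by (simp add: T_def d_def xb_def X_def Xn_def Sn_def S_def g_def N_def)
qed

end
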